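(* Let $(S,\sigma)$ be an enriched permutation of $\mathbb{Z}_{>0}$ (that is, $S\subseteq\mathbb{Z}_{>0}$ is a finite subset and $\sigma$ is a permutation of $S$). Then $R(I_S)\leq R(\sigma)$, with equality if and only if $\sigma=I_S$, where $I_S$ denotes the identity permutation of $S$.
   Context: Let $p$ be a prime and fix $y\in\mathbb{Z}_p$ which is not a positive integer, with $p$-adic expansion $y=\sum_{n\geq 0} y_n p^n$, $0\leq y_n<p$. For an integer $n\geq 1$ define $d(n)=p^w$, where $w$ is the unique integer with $\sum_{j=0}^{w-1} y_j < n \leq \sum_{j=0}^{w} y_j$; for $n<1$ set $d(n)=0$. For $m\in\mathbb{Z}$ set $y(m)=\sum_{n=1}^{m} d(n)$ (equal to $0$ when $m<1$). For $k_1,k_2\in\mathbb{Z}_{>0}$ define $R(k_1,k_2)=y(pk_1-k_2)$, and for an enriched permutation $(S,\sigma)$ of $\mathbb{Z}_{>0}$ define $R(\sigma)=\sum_{k\in S}R(k,\sigma(k))$. *)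

theory Defs
  imports "HOL-Combinatorics.Permutations" "HOL-Computational_Algebra.Primes"
begin

text \<open>The p-adic integer y is represented by its digit sequence ydig (y = sum ydig n * p^n).\<close>

definition dfun :: "nat \<Rightarrow> (nat \<Rightarrow> nat) \<Rightarrow> int \<Rightarrow> nat" where
  "dfun p ydig n = (if n < 1 then 0 else
     p ^ (THE w. int (\<Sum>j<w. ydig j) < n \<and> n \<le> int (\<Sum>j\<le>w. ydig j)))"

definition yfun :: "nat \<Rightarrow> (nat \<Rightarrow> nat) \<Rightarrow> int \<Rightarrow> nat" where
  "yfun p ydig m = (\<Sum>n\<in>{1..m}. dfun p ydig n)"

definition Rpair :: "nat \<Rightarrow> (nat \<Rightarrow> nat) \<Rightarrow> nat \<Rightarrow> nat \<Rightarrow> nat" where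
  "Rpair p ydig k1 k2 = yfun p ydig (int p * int k1 - int k2)"

definition Rperm :: "nat \<Rightarrow> (nat \<Rightarrow> nat) \<Rightarrow> nat set \<Rightarrow> (nat \<Rightarrow> nat) \<Rightarrow> nat" where
  "Rperm p ydig S \<sigma> = (\<Sum>k\<in>S. Rpair p ydig k (\<sigma> k))"

end

theory Submission
  imports Defs
begin

declare of_nat_sum[simp del]

context
  fixes p :: nat and ydig :: "nat \<Rightarrow> nat"
  assumes pp: "prime p" and dig: "\<forall>n. ydig n < p" and inf: "infinite {n. ydig n \<noteq> 0}"
begin

lemma p_gt1: "p > 1" using pp prime_gt_1_nat by blast

lemma C_mono: "a \<le> b \<Longrightarrow> (\<Sum>j<a. ydig j) \<le> (\<Sum>j<b. ydig j)"
  by (rule sum_mono2) auto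

lemma C_large: "\<exists>w. N \<le> (\<Sum>j<w. ydig j)"
proof -
  obtain F where F: "F \<subseteq> {n. ydig n \<noteq> 0}" "finite F" "card F = N"
    using infinite_arbitrarily_large[OF inf] by blast
  obtain w where w: "F \<subseteq> {..<w}"
    using F(2) by (intro that[of "Suc (Max F)"]) (auto simp: less_Suc_eq_le)
  have "N = (\<Sum>j\<in>F. 1)" using F by simp
  also have "\<dots> \<le> (\<Sum>j\<in>F. ydig j)" by (rule sum_mono) (use F in auto)
  also have "\<dots> \<le> (\<Sum>j<w. ydig j)" by (rule sum_mono2) (use w in auto)
  finally show ?thesis by blast
qed

lemma lev_exists:
  fixes n :: int assumes "n \<ge> 1"
  shows "\<exists>w. int (\<Sum>j<w. ydig j) < n \<and> n \<le> int (\<Sum>j<Suc w. ydig j)"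
proof -
  obtain w0 where w0: "nat n \<le> (\<Sum>j<w0. ydig j)" using C_large by blast
  have ex: "\<exists>w. nat n \<le> (\<Sum>j<Suc w. ydig j)"
    using w0 C_mono[of w0 "Suc w0"] by (intro exI[of _ w0]) linarith
  define w where "w = (LEAST w. nat n \<le> (\<Sum>j<Suc w. ydig j))"
  have h1: "nat n \<le> (\<Sum>j<Suc w. ydig j)" unfolding w_def by (rule LeastI_ex[OF ex])
  have h2: "(\<Sum>j<w. ydig j) < nat n"
  proof (cases w)
    case 0 then show ?thesis using assms by simp
  next
    case (Suc w')
    then have "w' < w" by simp
    then have "\<not> nat n \<le> (\<Sum>j<Suc w'. ydig j)" unfolding w_def using not_less_Least by blast
    then show ?thesis using Suc by simp
  qed
  show ?thesis using h1 h2 assms by (intro exI[of _ w]) auto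
qed

lemma d_eq:
  fixes n :: int assumes "n \<ge> 1" "int (\<Sum>j<w. ydig j) < n" "n \<le> int (\<Sum>j<Suc w. ydig j)"
  shows "dfun p ydig n = p ^ w"
proof -
  have nl: "\<not> n < 1" using assms(1) by simp
  have th: "(THE w. int (\<Sum>j<w. ydig j) < n \<and> n \<le> int (\<Sum>j\<le>w. ydig j)) = w"
  proof (rule the_equality)
    show "int (\<Sum>j<w. ydig j) < n \<and> n \<le> int (\<Sum>j\<le>w. ydig j)"
      using assms by (simp add: lessThan_Suc_atMost[symmetric])
  next
    fix v assume v: "int (\<Sum>j<v. ydig j) < n \<and> n \<le> int (\<Sum>j\<le>v. ydig j)"
    show "v = w"
    proof (rule ccontr)
      assume "v \<noteq> w"
      then have "Suc v \<le> w \<or> Suc w \<le> v" by auto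
      then show False
      proof
        assume "Suc v \<le> w"
        then have "(\<Sum>j<Suc v. ydig j) \<le> (\<Sum>j<w. ydig j)" by (rule C_mono)
        then show False using v assms by (simp add: lessThan_Suc_atMost[symmetric] del: of_nat_sum sum.lessThan_Suc)
      next
        assume "Suc w \<le> v"
        then have "(\<Sum>j<Suc w. ydig j) \<le> (\<Sum>j<v. ydig j)" by (rule C_mono)
        then show False using v assms by (simp add: lessThan_Suc_atMost[symmetric] del: of_nat_sum sum.lessThan_Suc)
      qed
    qed
  qed
  show ?thesis unfolding dfun_def if_not_P[OF nl] th by (rule refl)
qed

lemma d_zero: "(n::int) < 1 \<Longrightarrow> dfun p ydig n = 0"
  unfolding dfun_def by simp

lemma lev_le:
  fixes n1 n2 :: int
  assumes "n1 \<le> n2" "int (\<Sum>j<w1. ydig j) < n1" "n1 \<le> int (\<Sum>j<Suc w1. ydig j)"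
    "int (\<Sum>j<w2. ydig j) < n2" "n2 \<le> int (\<Sum>j<Suc w2. ydig j)"
  shows "w1 \<le> w2"
proof (rule ccontr)
  assume "\<not> w1 \<le> w2"
  then have "Suc w2 \<le> w1" by simp
  then have "(\<Sum>j<Suc w2. ydig j) \<le> (\<Sum>j<w1. ydig j)" by (rule C_mono)
  then show False using assms by linarith
qed

lemma d_mono:
  fixes n1 n2 :: int assumes "n1 \<le> n2"
  shows "dfun p ydig n1 \<le> dfun p ydig n2"
proof (cases "n1 < 1")
  case True then show ?thesis by (simp add: d_zero)
next
  case False
  then have "n1 \<ge> 1" "n2 \<ge> 1" using assms by auto
  obtain w1 where w1: "int (\<Sum>j<w1. ydig j) < n1" "n1 \<le> int (\<Sum>j<Suc w1. ydig j)"
    using lev_exists[OF \<open>n1 \<ge> 1\<close>] by blast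
  obtain w2 where w2: "int (\<Sum>j<w2. ydig j) < n2" "n2 \<le> int (\<Sum>j<Suc w2. ydig j)"
    using lev_exists[OF \<open>n2 \<ge> 1\<close>] by blast
  have "w1 \<le> w2" using lev_le[OF assms w1 w2] .
  then have "p ^ w1 \<le> p ^ w2" using p_gt1 by (simp add: power_increasing)
  then show ?thesis using d_eq[OF \<open>n1 \<ge> 1\<close> w1] d_eq[OF \<open>n2 \<ge> 1\<close> w2] by simp
qed

lemma d_strict:
  fixes n1 n2 :: int assumes "n2 \<ge> 1" "n1 + int p \<le> n2"
  shows "dfun p ydig n1 < dfun p ydig n2"
proof -
  obtain w2 where w2: "int (\<Sum>j<w2. ydig j) < n2" "n2 \<le> int (\<Sum>j<Suc w2. ydig j)"
    using lev_exists[OF \<open>n2 \<ge> 1\<close>] by blast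
  have d2: "dfun p ydig n2 = p ^ w2" using d_eq[OF \<open>n2 \<ge> 1\<close> w2] .
  show ?thesis
  proof (cases "n1 < 1")
    case True then show ?thesis using d2 p_gt1 by (simp add: d_zero)
  next
    case False
    then have "n1 \<ge> 1" by simp
    obtain w1 where w1: "int (\<Sum>j<w1. ydig j) < n1" "n1 \<le> int (\<Sum>j<Suc w1. ydig j)"
      using lev_exists[OF \<open>n1 \<ge> 1\<close>] by blast
    have le: "w1 \<le> w2" using lev_le[OF _ w1 w2] assms by simp
    have "w1 \<noteq> w2"
    proof
      assume "w1 = w2"
      have "ydig w1 < p" using dig by simp
      then show False using w1 w2 \<open>w1 = w2\<close> assms by simp
    qed
    then have "w1 < w2" using le by simp
    then have "p ^ w1 < p ^ w2" using p_gt1 by (simp add: power_strict_increasing)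
    then show ?thesis using d_eq[OF \<open>n1 \<ge> 1\<close> w1] d2 by simp
  qed
qed

lemma y_step: "yfun p ydig m = yfun p ydig (m - 1) + dfun p ydig m"
proof (cases "m \<ge> 1")
  case True
  have "{1..m} = insert m {1..m-1}" using True by auto
  then show ?thesis unfolding yfun_def by simp
next
  case False
  then show ?thesis unfolding yfun_def by (simp add: d_zero)
qed

lemma y_weak:
  fixes u1 u2 :: int assumes "u1 \<le> u2"
  shows "yfun p ydig (u1 + int t) + yfun p ydig u2 \<le> yfun p ydig (u2 + int t) + yfun p ydig u1"
proof (induction t)
  case 0 then show ?case by simp
next
  case (Suc t)
  have a: "yfun p ydig (u1 + int (Suc t)) = yfun p ydig (u1 + int t) + dfun p ydig (u1 + int (Suc t))"
    using y_step[of "u1 + int (Suc t)"] by simp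
  have b: "yfun p ydig (u2 + int (Suc t)) = yfun p ydig (u2 + int t) + dfun p ydig (u2 + int (Suc t))"
    using y_step[of "u2 + int (Suc t)"] by simp
  have "dfun p ydig (u1 + int (Suc t)) \<le> dfun p ydig (u2 + int (Suc t))"
    using assms by (intro d_mono) simp
  then show ?case using a b Suc by simp
qed

lemma y_strict:
  fixes u1 u2 :: int assumes "u1 + int p \<le> u2" "u2 \<ge> 0"
  shows "yfun p ydig (u1 + int (Suc t)) + yfun p ydig u2 < yfun p ydig (u2 + int (Suc t)) + yfun p ydig u1"
proof -
  have w: "yfun p ydig (u1 + int t) + yfun p ydig u2 \<le> yfun p ydig (u2 + int t) + yfun p ydig u1"
    using y_weak assms by simp
  have a: "yfun p ydig (u1 + int (Suc t)) = yfun p ydig (u1 + int t) + dfun p ydig (u1 + int (Suc t))"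
    using y_step[of "u1 + int (Suc t)"] by simp
  have b: "yfun p ydig (u2 + int (Suc t)) = yfun p ydig (u2 + int t) + dfun p ydig (u2 + int (Suc t))"
    using y_step[of "u2 + int (Suc t)"] by simp
  have "dfun p ydig (u1 + int (Suc t)) < dfun p ydig (u2 + int (Suc t))"
    using assms by (intro d_strict) auto
  then show ?thesis using a b w by simp
qed

lemma strict_main:
  assumes "finite S" "0 \<notin> S"
  shows "\<sigma> permutes S \<Longrightarrow> \<sigma> \<noteq> id \<Longrightarrow> Rperm p ydig S id < Rperm p ydig S \<sigma>"
proof (induction "card {k. \<sigma> k \<noteq> k}" arbitrary: \<sigma> rule: less_induct)
  case less
  note perm = less.prems(1)
  define M where "M = {k. \<sigma> k \<noteq> k}"
  have MS: "M \<subseteq> S" unfolding M_def using perm permutes_not_in by fastforce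
  have finM: "finite M" using MS assms(1) finite_subset by blast
  have Mne: "M \<noteq> {}" unfolding M_def using less.prems(2) by auto
  define m where "m = Max M"
  have mM: "m \<in> M" unfolding m_def using finM Mne by simp
  have mmax: "\<And>k. k \<in> M \<Longrightarrow> k \<le> m" unfolding m_def using finM by simp
  have mS: "m \<in> S" using mM MS by blast
  define a where "a = \<sigma> m"
  have aS: "a \<in> S" unfolding a_def using permutes_in_image[OF perm] mS by simp
  have am: "a \<noteq> m" using mM unfolding a_def M_def by simp
  have inj: "inj \<sigma>" using permutes_inj[OF perm] .
  have "a < m"
  proof (rule ccontr)
    assume "\<not> a < m"
    then have "a > m" using am by simp
    then have "a \<notin> M" using mmax by force
    then have "\<sigma> a = a" unfolding M_def by simp
    then have "\<sigma> a = \<sigma> m" unfolding a_def by simp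
    then show False using inj am by (meson injD)
  qed
  define j where "j = inv \<sigma> m"
  have sj: "\<sigma> j = m" unfolding j_def by (rule permutes_inverses(1)[OF perm])
  have jS: "j \<in> S" using sj mS permutes_in_image[OF perm, of j] by simp
  have jm: "j \<noteq> m" using sj mM unfolding M_def by auto
  have "j \<in> M" unfolding M_def using sj jm by simp
  then have "j < m" using mmax jm by force
  have m1: "m \<ge> 1" using mS assms(2) by (cases m) auto
  define \<tau> where "\<tau> = transpose m a \<circ> \<sigma>"
  have tperm: "\<tau> permutes S" unfolding \<tau>_def
    by (rule permutes_compose[OF perm permutes_swap_id[OF mS aS]])
  have tj: "\<tau> j = a" unfolding \<tau>_def using sj by simp
  have tm: "\<tau> m = m" unfolding \<tau>_def a_def by simp
  have toth: "\<tau> k = \<sigma> k" if "k \<noteq> j" "k \<noteq> m" for k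
  proof -
    have "\<sigma> k \<noteq> m" using that sj inj by (metis injD)
    moreover have "\<sigma> k \<noteq> a" using that inj unfolding a_def by (metis injD)
    ultimately show ?thesis unfolding \<tau>_def by (simp add: transpose_apply_other)
  qed
  have sub: "{k. \<tau> k \<noteq> k} \<subseteq> M - {m}"
  proof
    fix k assume "k \<in> {k. \<tau> k \<noteq> k}"
    then have k: "\<tau> k \<noteq> k" by simp
    then have "k \<noteq> m" using tm by auto
    moreover have "k \<in> M"
    proof (cases "k = j")
      case True then show ?thesis using \<open>j \<in> M\<close> by simp
    next
      case False then show ?thesis using k toth \<open>k \<noteq> m\<close> unfolding M_def by simp
    qed
    ultimately show "k \<in> M - {m}" by simp
  qed
  have lesscard: "card {k. \<tau> k \<noteq> k} < card M"
  proof -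
    have "card {k. \<tau> k \<noteq> k} \<le> card (M - {m})" using sub finM by (intro card_mono) auto
    also have "\<dots> < card M" using finM mM by (meson card_Diff1_less)
    finally show ?thesis .
  qed
  define f where "f k = Rpair p ydig k (\<sigma> k)" for k
  define g where "g k = Rpair p ydig k (\<tau> k)" for k
  have S_split: "S = insert j (insert m (S - {j, m}))" using jS mS by auto
  have fsum: "Rperm p ydig S \<sigma> = f j + f m + sum f (S - {j, m})"
    unfolding Rperm_def f_def[symmetric] using assms(1) jm
    by (subst S_split) (simp add: add.assoc)
  have gsum: "Rperm p ydig S \<tau> = g j + g m + sum g (S - {j, m})"
    unfolding Rperm_def g_def[symmetric] using assms(1) jm
    by (subst S_split) (simp add: add.assoc)
  have fg: "sum f (S - {j, m}) = sum g (S - {j, m})"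
    by (rule sum.cong) (auto simp: f_def g_def toth)
  have key: "g j + g m < f j + f m"
  proof -
    define u1 where "u1 = int p * int j - int m"
    define u2 where "u2 = int p * int m - int m"
    have h1: "u1 + int p \<le> u2"
    proof -
      have "int p * (int j + 1) \<le> int p * int m"
        using \<open>j < m\<close> by (intro mult_left_mono) auto
      then show ?thesis unfolding u1_def u2_def by (simp add: algebra_simps)
    qed
    have h2: "u2 \<ge> 0"
    proof -
      have "1 * int m \<le> int p * int m" using p_gt1 by (intro mult_right_mono) auto
      then show ?thesis unfolding u2_def by simp
    qed
    obtain t where t: "m - a = Suc t" using \<open>a < m\<close> by (metis Suc_diff_Suc)
    have tt: "int (Suc t) = int m - int a" using t \<open>a < m\<close> by simp
    have "yfun p ydig (u1 + int (Suc t)) + yfun p ydig u2 < yfun p ydig (u2 + int (Suc t)) + yfun p ydig u1"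
      by (rule y_strict[OF h1 h2])
    moreover have "g j = yfun p ydig (u1 + int (Suc t))" unfolding g_def Rpair_def tj u1_def tt by simp
    moreover have "g m = yfun p ydig u2" unfolding g_def Rpair_def tm u2_def by simp
    moreover have "f m = yfun p ydig (u2 + int (Suc t))" unfolding f_def Rpair_def u2_def tt a_def[symmetric] by simp
    moreover have "f j = yfun p ydig u1" unfolding f_def Rpair_def sj u1_def by simp
    ultimately show ?thesis by simp
  qed
  have lt: "Rperm p ydig S \<tau> < Rperm p ydig S \<sigma>" using fsum gsum fg key by simp
  show ?case
  proof (cases "\<tau> = id")
    case True then show ?thesis using lt by simp
  next
    case False
    have "Rperm p ydig S id < Rperm p ydig S \<tau>"
      using less.hyps[OF _ tperm False] lesscard unfolding M_def by simp
    then show ?thesis using lt by simp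
  qed
qed

end

theorem proposition5p7:
  fixes p :: nat and ydig :: "nat \<Rightarrow> nat" and S :: "nat set" and \<sigma> :: "nat \<Rightarrow> nat"
  assumes "prime p"
    and "\<forall>n. ydig n < p"
    and "infinite {n. ydig n \<noteq> 0}"
    and "finite S" and "0 \<notin> S"
    and "\<sigma> permutes S"
  shows "Rperm p ydig S id \<le> Rperm p ydig S \<sigma> \<and> (Rperm p ydig S \<sigma> = Rperm p ydig S id \<longleftrightarrow> \<sigma> = id)"
proof (cases "\<sigma> = id")
  case True then show ?thesis by simp
next
  case False
  have "Rperm p ydig S id < Rperm p ydig S \<sigma>"
    using strict_main[OF assms(1-5) assms(6) False] .
  then show ?thesis using False by simp
qed

end
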